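(* Let $c\in\mathbb{N}$, $\beta$ a parameter, and $\varphi:(x_0,x_1,x_2,x_3)\mapsto\big(x_1,x_2,x_3,(x_1x_3+\beta x_2^c)/x_0\big)$. Then the two-form $$\omega=\left(\frac{dx_0\wedge dx_1}{x_0x_1}+\frac{dx_0\wedge dx_3}{x_0x_3}+\frac{dx_2\wedge dx_3}{x_2x_3}\right)-c\left(\frac{dx_0\wedge dx_2}{x_0x_2}+\frac{dx_1\wedge dx_3}{x_1x_3}\right)+(c+1)\frac{dx_1\wedge dx_2}{x_1x_2}$$ is preserved by $\varphi$ (i.e. $\varphi^*\omega=\omega$), and $\omega$ is symplectic for $c\neq 2$. When $c=2$, $\omega$ is degenerate, being the pullback of the two-form $(u_1u_2)^{-1}\,du_1\wedge du_2$ under the map $(x_0,x_1,x_2,x_3)\mapsto(u_1,u_2)=\big(x_0x_2/x_1^2,\;x_1x_3/x_2^2\big)$.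
   Context: $\mathbb{N}$ includes $0$. *)

theory Defs
  imports "HOL-Analysis.Analysis"
begin

text \<open>Differential two-forms on an open set of a Euclidean space are represented pointwise:
  a two-form is a function assigning to each point x a bilinear (alternating) form
  omega x v w on tangent vectors v, w.\<close>

type_synonym 'a twoform = "'a \<Rightarrow> 'a \<Rightarrow> 'a \<Rightarrow> real"

definition dwedge :: "'i \<Rightarrow> 'i \<Rightarrow> real^'i \<Rightarrow> real^'i \<Rightarrow> real" where
  "dwedge i j v w = v$i * w$j - v$j * w$i"

definition pullback2 :: "('a::real_normed_vector \<Rightarrow> 'b::real_normed_vector) \<Rightarrow> 'b twoform \<Rightarrow> 'a twoform" where
  "pullback2 F \<omega> x v w =
     \<omega> (F x) (frechet_derivative F (at x) v) (frechet_derivative F (at x) w)"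

definition ext_d2 :: "('a::real_normed_vector) twoform \<Rightarrow> 'a \<Rightarrow> 'a \<Rightarrow> 'a \<Rightarrow> 'a \<Rightarrow> real" where
  "ext_d2 \<omega> x u v w =
      frechet_derivative (\<lambda>y. \<omega> y v w) (at x) u
    - frechet_derivative (\<lambda>y. \<omega> y u w) (at x) v
    + frechet_derivative (\<lambda>y. \<omega> y u v) (at x) w"

definition nondegenerate_at :: "('a::real_vector) twoform \<Rightarrow> 'a \<Rightarrow> bool" where
  "nondegenerate_at \<omega> x \<longleftrightarrow> (\<forall>v. (\<forall>w. \<omega> x v w = 0) \<longrightarrow> v = 0)"

definition symplectic_on :: "'a set \<Rightarrow> ('a::real_normed_vector) twoform \<Rightarrow> bool" where
  "symplectic_on U \<omega> \<longleftrightarrow>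
     (\<forall>x\<in>U. (\<forall>v w. (\<lambda>y. \<omega> y v w) differentiable (at x))
            \<and> (\<forall>u v w. ext_d2 \<omega> x u v w = 0)
            \<and> nondegenerate_at \<omega> x)"

definition torus :: "(real^'i) set" where
  "torus = {x. \<forall>i. x$i \<noteq> 0}"

text \<open>The map phi (coordinates x0..x3 are indices 0..3 of real^4; indexed 0..3 by the numeral type 4).\<close>
definition phi :: "nat \<Rightarrow> real \<Rightarrow> real^4 \<Rightarrow> real^4" where
  "phi c \<beta> x = (\<chi> i. if i = 0 then x$1 else if i = 1 then x$2 else if i = 2 then x$3
                          else (x$1 * x$3 + \<beta> * (x$2)^c) / x$0)"

definition omega :: "nat \<Rightarrow> (real^4) twoform" where
  "omega c x v w =
     (dwedge 0 1 v w / (x$0 * x$1) + dwedge 0 3 v w / (x$0 * x$3) + dwedge 2 3 v w / (x$2 * x$3))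
     - real c * (dwedge 0 2 v w / (x$0 * x$2) + dwedge 1 3 v w / (x$1 * x$3))
     + (real c + 1) * (dwedge 1 2 v w / (x$1 * x$2))"

definition psi :: "real^4 \<Rightarrow> real^2" where
  "psi x = (\<chi> i. if i = 0 then x$0 * x$2 / (x$1)^2 else x$1 * x$3 / (x$2)^2)"

definition eta :: "(real^2) twoform" where
  "eta u a b = dwedge 0 1 a b / (u$0 * u$1)"

end

theory Submission imports Defs begin

lemma hd_nth[derivative_intros]: "((\<lambda>y. y$i) has_derivative (\<lambda>u. u$i)) F"
  by (rule bounded_linear_imp_has_derivative) (rule bounded_linear_vec_nth)

lemma hd_vec:
  fixes f :: "'a::real_normed_vector \<Rightarrow> real^'n"
  assumes "\<And>i. ((\<lambda>x. f x $ i) has_derivative (\<lambda>v. f' v $ i)) (at a)"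
  shows "(f has_derivative f') (at a)"
  using has_derivative_componentwise_within[of f f' a UNIV] assms
  by (auto simp: Basis_vec_def cart_eq_inner_axis)

definition phiD :: "nat \<Rightarrow> real \<Rightarrow> real^4 \<Rightarrow> real^4 \<Rightarrow> real^4" where
  "phiD c \<beta> x v = (\<chi> i. if i = 0 then v$1 else if i = 1 then v$2 else if i = 2 then v$3
     else (v$1 * x$3 + x$1 * v$3 + \<beta> * (real c * x$2^(c-1) * v$2)) / x$0
          - (x$1 * x$3 + \<beta> * (x$2)^c) * v$0 / (x$0)^2)"

lemma phi_hd:
  assumes "x$0 \<noteq> 0"
  shows "(phi c \<beta> has_derivative phiD c \<beta> x) (at x)"
proof (rule hd_vec)
  fix i :: 4
  have d3: "((\<lambda>y. (y$1 * y$3 + \<beta> * (y$2)^c) / y$0) has_derivative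
     (\<lambda>v. (v$1 * x$3 + x$1 * v$3 + \<beta> * (real c * x$2^(c-1) * v$2)) / x$0
          - (x$1 * x$3 + \<beta> * (x$2)^c) * v$0 / (x$0)^2)) (at x)"
    using assms
    by (auto intro!: derivative_eq_intros ext simp: field_simps power2_eq_square)
  show "((\<lambda>y. phi c \<beta> y $ i) has_derivative (\<lambda>v. phiD c \<beta> x v $ i)) (at x)"
    unfolding phi_def phiD_def vec_lambda_beta
    using d3 by (cases "i=0"; cases "i=1"; cases "i=2") (simp_all add: hd_nth)
qed

definition Om :: "real \<Rightarrow> (4 \<Rightarrow> real) \<Rightarrow> (4 \<Rightarrow> real) \<Rightarrow> real" where
  "Om C a b = ((a 0 * b 1 - a 1 * b 0) + (a 0 * b 3 - a 3 * b 0) + (a 2 * b 3 - a 3 * b 2))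
     - C * ((a 0 * b 2 - a 2 * b 0) + (a 1 * b 3 - a 3 * b 1)) + (C + 1) * (a 1 * b 2 - a 2 * b 1)"

lemma dw: "x$i \<noteq> 0 \<Longrightarrow> x$j \<noteq> 0 \<Longrightarrow>
  dwedge i j v w / (x$i * x$j) = (v$i/x$i) * (w$j/x$j) - (v$j/x$j) * (w$i/x$i)"
  by (simp add: dwedge_def field_simps)

lemma om_log: "x \<in> torus \<Longrightarrow> omega c x v w = Om (real c) (\<lambda>i. v$i/x$i) (\<lambda>i. w$i/x$i)"
  unfolding torus_def by (simp add: omega_def Om_def dw)

lemma phi3_alg:
  fixes x0 x1 x2 x3 v0 v1 v2 v3 p q \<beta> C :: real
  assumes "x0 \<noteq> 0" "x1 \<noteq> 0" "x2 \<noteq> 0" "x3 \<noteq> 0" "x1*x3 + \<beta>*p \<noteq> 0" "C*q = C*p/x2"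
  shows "((v1 * x3 + x1 * v3 + \<beta> * (C * q * v2)) / x0 - (x1 * x3 + \<beta> * p) * v0 / x0^2) / ((x1 * x3 + \<beta> * p) / x0) =
    - (v0/x0) + (x1*x3/(x1*x3 + \<beta>*p)) * (v1/x1 + v3/x3)
    + (1 - x1*x3/(x1*x3 + \<beta>*p)) * C * (v2/x2)"
proof -
  have e: "\<beta> * (C * q * v2) = C * (\<beta> * p) * v2 / x2" using assms(6) by (metis mult.commute mult.left_commute times_divide_eq_right)
  define D where "D = x1*x3 + \<beta>*p"
  have bp: "\<beta> * p = D - x1*x3" unfolding D_def by simp
  have D: "D \<noteq> 0" using assms(5) unfolding D_def .
  show ?thesis unfolding e bp using assms(1-4) D by (simp add: field_simps power2_eq_square)
qed

lemma phi3:
  assumes "x \<in> torus" "phi c \<beta> x \<in> torus"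
  shows "phiD c \<beta> x v $ 3 / phi c \<beta> x $ 3 =
    - (v$0/x$0) + (x$1*x$3/(x$1*x$3 + \<beta>*x$2^c)) * (v$1/x$1 + v$3/x$3)
    + (1 - x$1*x$3/(x$1*x$3 + \<beta>*x$2^c)) * real c * (v$2/x$2)"
proof -
  have x: "x$0 \<noteq> 0" "x$1 \<noteq> 0" "x$2 \<noteq> 0" "x$3 \<noteq> 0" using assms(1) by (auto simp: torus_def)
  have "phi c \<beta> x $ 3 \<noteq> 0" using assms(2) by (auto simp: torus_def)
  then have y: "x$1*x$3 + \<beta>*x$2^c \<noteq> 0" by (simp add: phi_def)
  have q: "real c * x$2^(c-1) = real c * x$2^c / x$2"
    using x by (cases c) auto
  have "phiD c \<beta> x v $ 3 / phi c \<beta> x $ 3 = ((v$1 * x$3 + x$1 * v$3 + \<beta> * (real c * x$2^(c-1) * v$2)) / x$0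
          - (x$1 * x$3 + \<beta> * (x$2)^c) * v$0 / (x$0)^2) / ((x$1 * x$3 + \<beta> * (x$2)^c) / x$0)"
    by (simp add: phiD_def phi_def)
  also have "\<dots> = - (v$0/x$0) + (x$1*x$3/(x$1*x$3 + \<beta>*x$2^c)) * (v$1/x$1 + v$3/x$3)
    + (1 - x$1*x$3/(x$1*x$3 + \<beta>*x$2^c)) * real c * (v$2/x$2)"
    by (rule phi3_alg) (use x y q in auto)
  finally show ?thesis .
qed

lemma Om_phi:
  assumes "a' 0 = a 1" "a' 1 = a 2" "a' 2 = a 3" "a' 3 = -a 0 + t*(a 1 + a 3) + (1-t)*C*a 2"
   "b' 0 = b 1" "b' 1 = b 2" "b' 2 = b 3" "b' 3 = -b 0 + t*(b 1 + b 3) + (1-t)*C*b 2"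
  shows "Om C a' b' = Om C a b"
  unfolding Om_def assms by (simp add: algebra_simps)

lemma part1:
  assumes "x \<in> torus" "phi c \<beta> x \<in> torus"
  shows "pullback2 (phi c \<beta>) (omega c) x = omega c x"
proof (intro ext)
  fix v w
  have x0: "x$0 \<noteq> 0" using assms(1) by (auto simp: torus_def)
  have fd: "frechet_derivative (phi c \<beta>) (at x) = phiD c \<beta> x"
    using frechet_derivative_at[OF phi_hd[OF x0]] by simp
  have "pullback2 (phi c \<beta>) (omega c) x v w = omega c (phi c \<beta> x) (phiD c \<beta> x v) (phiD c \<beta> x w)"
    by (simp add: pullback2_def fd)
  also have "\<dots> = Om (real c) (\<lambda>i. phiD c \<beta> x v $ i / phi c \<beta> x $ i) (\<lambda>i. phiD c \<beta> x w $ i / phi c \<beta> x $ i)"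
    by (rule om_log[OF assms(2)])
  also have "\<dots> = Om (real c) (\<lambda>i. v$i/x$i) (\<lambda>i. w$i/x$i)"
    by (rule Om_phi) (simp_all only: phi3[OF assms], simp_all add: phiD_def phi_def)
  also have "\<dots> = omega c x v w" by (rule om_log[OF assms(1), symmetric])
  finally show "pullback2 (phi c \<beta>) (omega c) x v w = omega c x v w" .
qed

definition Td :: "4 \<Rightarrow> 4 \<Rightarrow> real^4 \<Rightarrow> real^4 \<Rightarrow> real^4 \<Rightarrow> real^4 \<Rightarrow> real" where
  "Td i j x v w u = -(u$i/x$i + u$j/x$j) * (dwedge i j v w / (x$i*x$j))"

lemma T_hd:
  assumes "x$i \<noteq> 0" "x$j \<noteq> 0"
  shows "((\<lambda>y. dwedge i j v w / (y$i*y$j)) has_derivative Td i j x v w) (at x)"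
  unfolding Td_def using assms
  by (auto intro!: derivative_eq_intros ext simp: field_simps power2_eq_square)

definition omD :: "nat \<Rightarrow> real^4 \<Rightarrow> real^4 \<Rightarrow> real^4 \<Rightarrow> real^4 \<Rightarrow> real" where
  "omD c x v w = (\<lambda>u. (Td 0 1 x v w u + Td 0 3 x v w u + Td 2 3 x v w u)
     - real c * (Td 0 2 x v w u + Td 1 3 x v w u) + (real c + 1) * Td 1 2 x v w u)"

lemma om_hd:
  assumes "x \<in> torus"
  shows "((\<lambda>y. omega c y v w) has_derivative omD c x v w) (at x)"
proof -
  have x: "\<And>i. x$i \<noteq> 0" using assms by (auto simp: torus_def)
  show ?thesis
    unfolding omega_def omD_def
    by (intro has_derivative_add has_derivative_diff has_derivative_mult_right T_hd x)
qed

lemma ext0: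
  assumes "x \<in> torus"
  shows "ext_d2 (omega c) x u v w = 0"
proof -
  have x: "\<And>i. x$i \<noteq> 0" using assms by (auto simp: torus_def)
  have fd: "\<And>v w. frechet_derivative (\<lambda>y. omega c y v w) (at x) = omD c x v w"
    using frechet_derivative_at[OF om_hd[OF assms]] by simp
  show ?thesis
    unfolding ext_d2_def fd omD_def Td_def dw[OF x x] by (simp add: algebra_simps)
qed

lemma nondeg:
  assumes "x \<in> torus" "c \<noteq> 2"
  shows "nondegenerate_at (omega c) x"
  unfolding nondegenerate_at_def
proof (intro allI impI)
  fix v assume h: "\<forall>w. omega c x v w = 0"
  have x: "\<And>i. x$i \<noteq> 0" using assms by (auto simp: torus_def)
  define a where "a = (\<lambda>i. v$i / x$i)"
  define C where "C = real c"
  have E: "Om C a (\<lambda>i. if i = j then 1 else 0) = 0" for j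
  proof -
    have "omega c x v (\<chi> i. if i = j then x$j else 0) = 0" using h by simp
    moreover have "(\<lambda>i. (\<chi> i. if i = j then x$j else 0) $ i / x$i) = (\<lambda>i. if i = j then 1 else 0)"
      using x by auto
    ultimately show ?thesis unfolding om_log[OF assms(1)] a_def C_def by simp
  qed
  have E0: "-a 1 - a 3 + C * a 2 = 0" using E[of 0] by (simp add: Om_def)
  have E1: "a 0 + C * a 3 - (C+1) * a 2 = 0" using E[of 1] by (simp add: Om_def)
  have E2: "-a 3 - C * a 0 + (C+1) * a 1 = 0" using E[of 2] by (simp add: Om_def)
  have E3: "a 0 + a 2 - C * a 1 = 0" using E[of 3] by (simp add: Om_def)
  have P: "(C-2)*(C+1) \<noteq> 0" using assms(2) unfolding C_def by auto
  have "(C-2)*(C+1) * a 0 = 0" using E0 E1 E2 E3 by algebra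
  moreover have "(C-2)*(C+1) * a 1 = 0" using E0 E1 E2 E3 by algebra
  moreover have "(C-2)*(C+1) * a 2 = 0" using E0 E1 E2 E3 by algebra
  moreover have "(C-2)*(C+1) * a 3 = 0" using E0 E1 E2 E3 by algebra
  ultimately have "a 0 = 0" "a 1 = 0" "a 2 = 0" "a 3 = 0" using P by simp_all
  then have "v$0 = 0" "v$1 = 0" "v$2 = 0" "v$3 = 0" using x unfolding a_def by simp_all
  moreover have f4: "(4::4) = 0" by simp
  ultimately show "v = 0" unfolding vec_eq_iff forall_4 f4 by simp
qed

lemma degen:
  assumes "x \<in> torus"
  shows "\<not> nondegenerate_at (omega 2) x"
proof -
  have x: "\<And>i. x$i \<noteq> 0" using assms by (auto simp: torus_def)
  have "omega 2 x x w = 0" for w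
    unfolding om_log[OF assms] using x by (simp add: Om_def algebra_simps)
  moreover have "x \<noteq> 0" using x[of 0] by auto
  ultimately show ?thesis unfolding nondegenerate_at_def by blast
qed

definition psiD :: "real^4 \<Rightarrow> real^4 \<Rightarrow> real^2" where
  "psiD x v = (\<chi> i. if i = 0 then (v$0 * x$2 + x$0 * v$2) / (x$1)^2 - 2 * x$0 * x$2 * v$1 / (x$1)^3
                    else (v$1 * x$3 + x$1 * v$3) / (x$2)^2 - 2 * x$1 * x$3 * v$2 / (x$2)^3)"

lemma psi_hd:
  assumes "x$1 \<noteq> 0" "x$2 \<noteq> 0"
  shows "(psi has_derivative psiD x) (at x)"
proof (rule hd_vec)
  fix i :: 2
  have d0: "((\<lambda>y. y$0 * y$2 / (y$1)^2) has_derivative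
      (\<lambda>v. (v$0 * x$2 + x$0 * v$2) / (x$1)^2 - 2 * x$0 * x$2 * v$1 / (x$1)^3)) (at x)"
    using assms by (auto intro!: derivative_eq_intros ext simp: field_simps power2_eq_square power3_eq_cube)
  have d1: "((\<lambda>y. y$1 * y$3 / (y$2)^2) has_derivative
      (\<lambda>v. (v$1 * x$3 + x$1 * v$3) / (x$2)^2 - 2 * x$1 * x$3 * v$2 / (x$2)^3)) (at x)"
    using assms by (auto intro!: derivative_eq_intros ext simp: field_simps power2_eq_square power3_eq_cube)
  show "((\<lambda>y. psi y $ i) has_derivative (\<lambda>v. psiD x v $ i)) (at x)"
    unfolding psi_def psiD_def vec_lambda_beta
    using d0 d1 by (cases "i=0") simp_all
qed

lemma psi_log:
  assumes "\<And>i. x$i \<noteq> 0"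
  shows "psiD x v $ 0 / psi x $ 0 = v$0/x$0 + v$2/x$2 - 2 * (v$1/x$1)"
    "psiD x v $ 1 / psi x $ 1 = v$1/x$1 + v$3/x$3 - 2 * (v$2/x$2)"
  using assms[of 0] assms[of 1] assms[of 2] assms[of 3]
  by (simp_all add: psiD_def psi_def field_simps power2_eq_square power3_eq_cube)

lemma psi_pb:
  assumes "x \<in> torus"
  shows "omega 2 x = pullback2 psi eta x"
proof (intro ext)
  fix v w
  have x: "\<And>i. x$i \<noteq> 0" using assms by (auto simp: torus_def)
  have fd: "frechet_derivative psi (at x) = psiD x"
    using frechet_derivative_at[OF psi_hd[OF x x]] by simp
  have p: "psi x $ 0 \<noteq> 0" "psi x $ 1 \<noteq> 0" using x[of 0] x[of 1] x[of 2] x[of 3] by (simp_all add: psi_def)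
  have "pullback2 psi eta x v w = eta (psi x) (psiD x v) (psiD x w)"
    by (simp add: pullback2_def fd)
  also have "\<dots> = (psiD x v $ 0 / psi x $ 0) * (psiD x w $ 1 / psi x $ 1) - (psiD x v $ 1 / psi x $ 1) * (psiD x w $ 0 / psi x $ 0)"
    unfolding eta_def by (rule dw[OF p])
  also have "\<dots> = omega 2 x v w"
    unfolding psi_log[OF x] om_log[OF assms] Om_def by (simp add: algebra_simps)
  finally show "omega 2 x v w = pullback2 psi eta x v w" by simp
qed

theorem corollary3p3:
  fixes c :: nat and \<beta> :: real
  shows "(\<forall>x\<in>torus. phi c \<beta> x \<in> torus \<longrightarrow> pullback2 (phi c \<beta>) (omega c) x = omega c x)
       \<and> (c \<noteq> 2 \<longrightarrow> symplectic_on torus (omega c))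
       \<and> (c = 2 \<longrightarrow> (\<forall>x\<in>torus. \<not> nondegenerate_at (omega c) x)
                 \<and> (\<forall>x\<in>torus. omega c x = pullback2 psi eta x))"
proof (intro conjI impI ballI)
  show "pullback2 (phi c \<beta>) (omega c) x = omega c x" if "x \<in> torus" "phi c \<beta> x \<in> torus" for x
    using part1 that .
  show "symplectic_on torus (omega c)" if "c \<noteq> 2"
    unfolding symplectic_on_def
    using om_hd ext0 nondeg[OF _ that] unfolding differentiable_def by blast
qed (use degen psi_pb in auto)
end
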